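(* Let $u,v\in\dot H^{-1}$ and $S>1/2$. Then for every $t\in\mathbb{R}$, with $B_2$ as defined in the context, $$\|B_2(u,v)\|_{\dot H^{-S}}\le c(S)\|u\|_{\dot H^{-1}}\|v\|_{\dot H^{-1}},\qquad c(S)=\Big(\sum_{k\in\mathbb{Z}_0}|k|^{-2S}\Big)^{1/2}.$$
   Context: Write $\mathbb{Z}_0=\mathbb{Z}\setminus\{0\}$. For $s\in\mathbb{R}$, $\dot H^s$ denotes the Hilbert space of complex sequences $v=(v_k)_{k\in\mathbb{Z}_0}$ with $\|v\|_{\dot H^s}^2=\sum_{k\in\mathbb{Z}_0}|k|^{2s}|v_k|^2<\infty$. For $t\in\mathbb{R}$, $$B_2(u,v)_k=\sum_{k_1+k_2=k,\ k_1,k_2\in\mathbb{Z}_0}\frac{e^{3ikk_1k_2t}u_{k_1}v_{k_2}}{k_1k_2},\qquad k\in\mathbb{Z}_0.$$ *)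

theory Defs
  imports "HOL-Analysis.Analysis"
begin

text \<open>Sequences indexed by Z_0 = Z - {0} are modelled as functions int => complex;
  the value at 0 is irrelevant (never used).\<close>

definition Z0 :: "int set" where "Z0 = UNIV - {0}"

definition in_Hdot :: "real \<Rightarrow> (int \<Rightarrow> complex) \<Rightarrow> bool" where
  "in_Hdot sg v \<longleftrightarrow> ((\<lambda>k. abs (real_of_int k) powr (2 * sg) * (norm (v k))^2) summable_on Z0)"

definition Hdot_norm :: "real \<Rightarrow> (int \<Rightarrow> complex) \<Rightarrow> real" where
  "Hdot_norm sg v = sqrt (\<Sum>\<^sub>\<infinity>k\<in>Z0. abs (real_of_int k) powr (2 * sg) * (norm (v k))^2)"

definition B2 :: "real \<Rightarrow> (int \<Rightarrow> complex) \<Rightarrow> (int \<Rightarrow> complex) \<Rightarrow> int \<Rightarrow> complex" where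
  "B2 t u v k = (\<Sum>\<^sub>\<infinity>k1\<in>{k1. k1 \<noteq> 0 \<and> k - k1 \<noteq> 0}.
      exp (\<i> * of_real (3 * real_of_int k * real_of_int k1 * real_of_int (k - k1) * t))
        * u k1 * v (k - k1) / (of_int k1 * of_int (k - k1)))"

definition cS :: "real \<Rightarrow> real" where
  "cS S = sqrt (\<Sum>\<^sub>\<infinity>k\<in>Z0. abs (real_of_int k) powr (-2 * S))"

end

theory Submission
  imports Defs
begin

lemma pseries:
  assumes "S > 1/2"
  shows "(\<lambda>k::int. \<bar>real_of_int k\<bar> powr (-2*S)) summable_on Z0"
proof -
  let ?f = "\<lambda>k::int. \<bar>real_of_int k\<bar> powr (-2*S)"
  have "summable (\<lambda>n. real n powr (-2*S))"
    using assms by (subst summable_real_powr_iff) auto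
  hence s: "(\<lambda>n. real n powr (-2*S)) summable_on UNIV"
    by (subst summable_on_UNIV_nonneg_real_iff) auto
  hence s1: "(\<lambda>n. real n powr (-2*S)) summable_on {n. n > 0}"
    by (rule summable_on_subset) auto
  have p: "?f summable_on (\<lambda>n. int n) ` {n. n > 0}"
    by (subst summable_on_reindex) (use s1 in \<open>auto simp: inj_on_def o_def\<close>)
  have m: "?f summable_on (\<lambda>n. - int n) ` {n. n > 0}"
    by (subst summable_on_reindex) (use s1 in \<open>auto simp: inj_on_def o_def\<close>)
  have "Z0 = (\<lambda>n. int n) ` {n. n > 0} \<union> (\<lambda>n. - int n) ` {n. n > 0}"
  proof -
    have "k \<in> (\<lambda>n. int n) ` {n. n > 0} \<union> (\<lambda>n. - int n) ` {n. n > 0}" if "k \<noteq> 0" for k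
    proof (cases "k > 0")
      case True thus ?thesis by (intro UnI1 image_eqI[of _ _ "nat k"]) auto
    next
      case False thus ?thesis using that by (intro UnI2 image_eqI[of _ _ "nat (-k)"]) auto
    qed
    thus ?thesis unfolding Z0_def by auto
  qed
  moreover have "(\<lambda>n. int n) ` {n. n > 0} \<inter> (\<lambda>n. - int n) ` {n. n > 0} = {}" by auto
  ultimately show ?thesis using summable_on_Un_disjoint[OF p m] by simp
qed

lemma cs:
  fixes p q :: "'a \<Rightarrow> real"
  assumes "\<And>x. x \<in> T \<Longrightarrow> p x \<ge> 0" "\<And>x. x \<in> T \<Longrightarrow> q x \<ge> 0"
    and sp: "(\<lambda>x. (p x)^2) summable_on T" and sq: "(\<lambda>x. (q x)^2) summable_on T"
  shows "(\<lambda>x. p x * q x) summable_on T \<and>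
    (\<Sum>\<^sub>\<infinity>x\<in>T. p x * q x) \<le> sqrt (\<Sum>\<^sub>\<infinity>x\<in>T. (p x)^2) * sqrt (\<Sum>\<^sub>\<infinity>x\<in>T. (q x)^2)"
proof -
  define P where "P = (\<Sum>\<^sub>\<infinity>x\<in>T. (p x)^2)"
  define Q where "Q = (\<Sum>\<^sub>\<infinity>x\<in>T. (q x)^2)"
  have bnd: "(\<Sum>\<^sub>\<infinity>x\<in>T. p x * q x) \<le> (l * P + Q / l) / 2" and summ: "(\<lambda>x. p x * q x) summable_on T"
    if l: "l > 0" for l
  proof -
    have le: "p x * q x \<le> (l * (p x)^2 + (q x)^2 / l) / 2" for x
    proof -
      have "0 \<le> (l * p x - q x)^2 / l" using l by simp
      also have "\<dots> = l * (p x)^2 + (q x)^2 / l - 2 * (p x * q x)"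
        using l by (simp add: power2_eq_square field_simps)
      finally show ?thesis by simp
    qed
    have s0: "(\<lambda>x. l * (p x)^2 + (q x)^2 * (1/l)) summable_on T"
      by (rule summable_on_add[OF summable_on_cmult_right[OF sp] summable_on_cmult_left[OF sq]])
    have s2: "(\<lambda>x. (l * (p x)^2 + (q x)^2 / l) / 2) summable_on T"
      using summable_on_cmult_left[OF s0, of "1/2"] by simp
    show s1: "(\<lambda>x. p x * q x) summable_on T"
      by (rule summable_on_comparison_test[OF s2]) (use le assms in auto)
    have "(\<Sum>\<^sub>\<infinity>x\<in>T. p x * q x) \<le> (\<Sum>\<^sub>\<infinity>x\<in>T. (l * (p x)^2 + (q x)^2 / l) / 2)"
      by (rule infsum_mono[OF s1 s2 le])
    also have "\<dots> = (\<Sum>\<^sub>\<infinity>x\<in>T. (l * (p x)^2 + (q x)^2 * (1/l)) * (1/2))" by simp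
    also have "\<dots> = (\<Sum>\<^sub>\<infinity>x\<in>T. (l * (p x)^2 + (q x)^2 * (1/l))) * (1/2)"
      by (rule infsum_cmult_left) (use s0 in auto)
    also have "(\<Sum>\<^sub>\<infinity>x\<in>T. (l * (p x)^2 + (q x)^2 * (1/l))) = l * P + Q * (1/l)"
      unfolding P_def Q_def
      unfolding infsum_add[OF summable_on_cmult_right[OF sp] summable_on_cmult_left[OF sq]]
          infsum_cmult_right[OF sp] infsum_cmult_left[OF sq] ..
    finally show "(\<Sum>\<^sub>\<infinity>x\<in>T. p x * q x) \<le> (l * P + Q / l) / 2" by simp
  qed
  have P0: "P \<ge> 0" "Q \<ge> 0" unfolding P_def Q_def by (auto intro: infsum_nonneg)
  have single: "(p x)^2 \<le> P" "(q x)^2 \<le> Q" if "x \<in> T" for x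
  proof -
    have "(\<Sum>\<^sub>\<infinity>y\<in>{x}. (p y)^2) \<le> P" unfolding P_def
      by (rule infsum_mono2[OF _ sp]) (use that in auto)
    thus "(p x)^2 \<le> P" by simp
    have "(\<Sum>\<^sub>\<infinity>y\<in>{x}. (q y)^2) \<le> Q" unfolding Q_def
      by (rule infsum_mono2[OF _ sq]) (use that in auto)
    thus "(q x)^2 \<le> Q" by simp
  qed
  have "(\<Sum>\<^sub>\<infinity>x\<in>T. p x * q x) \<le> sqrt P * sqrt Q"
  proof (cases "P = 0 \<or> Q = 0")
    case True
    have "p x * q x = 0" if "x \<in> T" for x
      using True single[OF that] by auto
    hence "(\<Sum>\<^sub>\<infinity>x\<in>T. p x * q x) = 0" by (simp add: infsum_0)
    thus ?thesis using P0 by simp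
  next
    case False
    hence pos: "P > 0" "Q > 0" using P0 by auto
    define l where "l = sqrt Q / sqrt P"
    have l: "l > 0" using pos by (simp add: l_def)
    have "(l * P + Q / l) / 2 = sqrt P * sqrt Q"
      using pos unfolding l_def
      by (simp add: field_simps)
    thus ?thesis using bnd[OF l] by simp
  qed
  thus ?thesis using summ[of 1] unfolding P_def Q_def by simp
qed
lemma wt: "k \<noteq> 0 \<Longrightarrow> \<bar>real_of_int k\<bar> powr (2 * -1) * (norm z)^2 = (norm z / \<bar>real_of_int k\<bar>)^2"
  by (simp add: powr_minus power_divide divide_inverse power_mult_distrib power_inverse powr_realpow[symmetric] del: powr_realpow)

theorem lemma7p5:
  fixes u v :: "int \<Rightarrow> complex" and S t :: real
  assumes "in_Hdot (-1) u" and "in_Hdot (-1) v" and "S > 1/2"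
  shows "in_Hdot (-S) (B2 t u v) \<and>
         Hdot_norm (-S) (B2 t u v) \<le> cS S * Hdot_norm (-1) u * Hdot_norm (-1) v"
proof -
  define a where "a k = norm (u k) / \<bar>real_of_int k\<bar>" for k
  define b where "b k = norm (v k) / \<bar>real_of_int k\<bar>" for k
  define A where "A = (\<Sum>\<^sub>\<infinity>k\<in>Z0. (a k)^2)"
  define B where "B = (\<Sum>\<^sub>\<infinity>k\<in>Z0. (b k)^2)"
  have cu: "(\<Sum>\<^sub>\<infinity>k\<in>Z0. \<bar>real_of_int k\<bar> powr (2 * -1) * (norm (u k))^2) = A"
    unfolding A_def a_def by (rule infsum_cong) (simp add: Z0_def wt[simplified])
  have cv: "(\<Sum>\<^sub>\<infinity>k\<in>Z0. \<bar>real_of_int k\<bar> powr (2 * -1) * (norm (v k))^2) = B"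
    unfolding B_def b_def by (rule infsum_cong) (simp add: Z0_def wt[simplified])
  have sa: "(\<lambda>k. (a k)^2) summable_on Z0"
    using assms(1) unfolding in_Hdot_def a_def
    by (rule summable_on_cong[THEN iffD1, rotated]) (simp add: Z0_def wt[simplified])
  have sb: "(\<lambda>k. (b k)^2) summable_on Z0"
    using assms(2) unfolding in_Hdot_def b_def
    by (rule summable_on_cong[THEN iffD1, rotated]) (simp add: Z0_def wt[simplified])
  have A0: "A \<ge> 0" "B \<ge> 0" unfolding A_def B_def by (auto intro: infsum_nonneg)
  have Bk: "norm (B2 t u v k) \<le> sqrt A * sqrt B" for k
  proof -
    define T where "T = {k1. k1 \<noteq> 0 \<and> k - k1 \<noteq> 0}"
    define h where "h k1 = k - k1" for k1 :: int
    have TZ: "T \<subseteq> Z0" "h ` T \<subseteq> Z0" unfolding T_def Z0_def h_def by auto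
    have inj: "inj_on h T" unfolding h_def inj_on_def by auto
    have sp: "(\<lambda>x. (a x)^2) summable_on T" by (rule summable_on_subset[OF sa TZ(1)])
    have sq0: "(\<lambda>x. (b x)^2) summable_on h ` T" by (rule summable_on_subset[OF sb TZ(2)])
    have sq: "(\<lambda>x. (b (k - x))^2) summable_on T"
      using sq0 unfolding summable_on_reindex[OF inj] by (simp add: o_def h_def)
    have Pa: "(\<Sum>\<^sub>\<infinity>x\<in>T. (a x)^2) \<le> A" unfolding A_def
      by (rule infsum_mono2[OF sp sa TZ(1)]) auto
    have "(\<Sum>\<^sub>\<infinity>x\<in>T. (b (k - x))^2) = (\<Sum>\<^sub>\<infinity>x\<in>h ` T. (b x)^2)"
      unfolding infsum_reindex[OF inj] by (simp add: o_def h_def)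
    also have "\<dots> \<le> B" unfolding B_def
      by (rule infsum_mono2[OF sq0 sb TZ(2)]) auto
    finally have Qb: "(\<Sum>\<^sub>\<infinity>x\<in>T. (b (k - x))^2) \<le> B" .
    have C: "(\<lambda>x. a x * b (k - x)) summable_on T \<and>
      (\<Sum>\<^sub>\<infinity>x\<in>T. a x * b (k - x)) \<le> sqrt (\<Sum>\<^sub>\<infinity>x\<in>T. (a x)^2) * sqrt (\<Sum>\<^sub>\<infinity>x\<in>T. (b (k - x))^2)"
      by (rule cs[OF _ _ sp sq]) (auto simp: a_def b_def)
    define f where "f k1 = exp (\<i> * of_real (3 * real_of_int k * real_of_int k1 * real_of_int (k - k1) * t))
        * u k1 * v (k - k1) / (of_int k1 * of_int (k - k1))" for k1
    have nf: "norm (f x) = a x * b (k - x)" for x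
      unfolding f_def a_def b_def norm_mult norm_divide norm_of_int norm_exp_i_times by simp
    have fs: "f summable_on T"
      by (rule abs_summable_summable) (use C in \<open>simp add: nf\<close>)
    have "norm (B2 t u v k) = norm (infsum f T)" unfolding B2_def T_def f_def ..
    also have "\<dots> \<le> (\<Sum>\<^sub>\<infinity>x\<in>T. a x * b (k - x))"
      by (rule norm_infsum_le[OF has_sum_infsum[OF fs] has_sum_infsum]) (use C nf in auto)
    also have "\<dots> \<le> sqrt A * sqrt B"
    proof -
      have h1: "sqrt (\<Sum>\<^sub>\<infinity>x\<in>T. (a x)^2) \<le> sqrt A" by (rule real_sqrt_le_mono[OF Pa])
      have h2: "sqrt (\<Sum>\<^sub>\<infinity>x\<in>T. (b (k - x))^2) \<le> sqrt B" by (rule real_sqrt_le_mono[OF Qb])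
      have "sqrt (\<Sum>\<^sub>\<infinity>x\<in>T. (a x)^2) * sqrt (\<Sum>\<^sub>\<infinity>x\<in>T. (b (k - x))^2) \<le> sqrt A * sqrt B"
        by (rule mult_mono[OF h1 h2]) (use A0 in \<open>auto intro: infsum_nonneg\<close>)
      thus ?thesis using C by linarith
    qed
    finally show ?thesis .
  qed
  define c where "c k = \<bar>real_of_int k\<bar> powr (-2*S)" for k
  have sc: "c summable_on Z0" unfolding c_def by (rule pseries[OF assms(3)])
  have sc2: "(\<lambda>k. c k * (A * B)) summable_on Z0" by (rule summable_on_cmult_left[OF sc])
  have le: "\<bar>real_of_int k\<bar> powr (2 * -S) * (norm (B2 t u v k))^2 \<le> c k * (A * B)" for k
  proof -
    have "(norm (B2 t u v k))^2 \<le> (sqrt A * sqrt B)^2"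
      by (rule power_mono[OF Bk]) simp
    also have "\<dots> = A * B" using A0 by (simp add: power_mult_distrib)
    moreover have "(2 * - S) = (-2 * S)" by simp
    ultimately show ?thesis unfolding c_def by (metis mult_left_mono powr_ge_zero)
  qed
  have sg: "(\<lambda>k. \<bar>real_of_int k\<bar> powr (2 * -S) * (norm (B2 t u v k))^2) summable_on Z0"
    by (rule summable_on_comparison_test[OF sc2 le]) auto
  have "(\<Sum>\<^sub>\<infinity>k\<in>Z0. \<bar>real_of_int k\<bar> powr (2 * -S) * (norm (B2 t u v k))^2) \<le> (\<Sum>\<^sub>\<infinity>k\<in>Z0. c k * (A * B))"
    by (rule infsum_mono[OF sg sc2 le])
  also have "\<dots> = (\<Sum>\<^sub>\<infinity>k\<in>Z0. c k) * (A * B)" by (rule infsum_cmult_left) (use sc in auto)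
  finally have "Hdot_norm (-S) (B2 t u v) \<le> sqrt ((\<Sum>\<^sub>\<infinity>k\<in>Z0. c k) * (A * B))"
    unfolding Hdot_norm_def by (rule real_sqrt_le_mono)
  also have "\<dots> = cS S * Hdot_norm (-1) u * Hdot_norm (-1) v"
    unfolding cS_def Hdot_norm_def cu cv c_def by (simp add: real_sqrt_mult)
  finally show ?thesis using sg unfolding in_Hdot_def by simp
qed

end
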